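(* Assume $\delta>d$, $\alpha=\gamma/(\delta-d)$, and that $f$ is not a polynomial product. Let $V\subset\mathbb{C}$ be a set whose closure is contained in $A_p$. Then the functions $$G_n(z,w)=\frac{1}{d^n}\log^+\frac{|w_n|}{|z_n|^\alpha},\qquad (z_n,w_n)=f^n(z,w),$$ converge uniformly on $V\times\mathbb{C}$ to $G_z^\alpha(w)=\lim_{n\to\infty}d^{-n}\log^+\big(|Q_z^n(w)|/|p^n(z)|^\alpha\big)$.
   Context: Let $p(z)=z^\delta+O(z^{\delta-1})$ be a monic polynomial of degree $\delta\ge 2$, and let $q(z,w)=b(z)w^d+(\text{terms of lower degree in } w)$ be a polynomial with $d=\deg_w q\ge 2$, where $b$ is a monic polynomial of degree $\gamma\ge 0$. Let $f(z,w)=(p(z),q(z,w))$; $f$ is a polynomial product if $q$ does not depend on $z$. Write $Q_z^n=q_{p^{n-1}(z)}\circ\cdots\circ q_{p(z)}\circ q_z$ with $q_z=q(z,\cdot)$, so $f^n(z,w)=(p^n(z),Q_z^n(w))$. Let $A_p=\{z: p^n(z)\to\infty\}$. For $\delta>d$, $\alpha=\max\{n_j/(\delta-m_j)\}$ over monomials $z^{n_j}w^{m_j}$ appearing in $q$ with nonzero coefficient. *)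

theory Defs
  imports "HOL-Analysis.Analysis" "HOL-Computational_Algebra.Polynomial"
begin

text \<open>The two-variable polynomial q(z,w) is represented as a polynomial in w whose
coefficients are polynomials in z: q(z,w) = sum_m (coeff q m)(z) w^m.
Its monomial z^n w^m has coefficient coeff (coeff q m) n.\<close>

definition qeval :: "complex poly poly \<Rightarrow> complex \<Rightarrow> complex \<Rightarrow> complex" where
  "qeval q z w = poly (map_poly (\<lambda>a. poly a z) q) w"

definition skew :: "complex poly \<Rightarrow> complex poly poly \<Rightarrow> complex \<times> complex \<Rightarrow> complex \<times> complex" where
  "skew p q = (\<lambda>(z, w). (poly p z, qeval q z w))"

text \<open>Q_z^n = q_{p^{n-1}(z)} o ... o q_{p(z)} o q_z.\<close>
fun Qiter :: "complex poly \<Rightarrow> complex poly poly \<Rightarrow> nat \<Rightarrow> complex \<Rightarrow> complex \<Rightarrow> complex" where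
  "Qiter p q 0 z w = w"
| "Qiter p q (Suc n) z w = Qiter p q n (poly p z) (qeval q z w)"

definition logplus :: "real \<Rightarrow> real" where
  "logplus x = max 0 (ln x)"

definition escape_set :: "complex poly \<Rightarrow> complex set" where
  "escape_set p = {z. filterlim (\<lambda>n. norm ((poly p ^^ n) z)) at_top sequentially}"

definition poly_product :: "complex poly poly \<Rightarrow> bool" where
  "poly_product q \<longleftrightarrow> (\<forall>m. degree (coeff q m) = 0)"

definition alpha_exp :: "nat \<Rightarrow> complex poly poly \<Rightarrow> real" where
  "alpha_exp \<delta> q = Max {real n / (real \<delta> - real m) | n m. coeff (coeff q m) n \<noteq> 0}"

end

theory Submission imports Defs begin

lemma qeval_sum: "qeval q a b = (\<Sum>m\<le>degree q. poly (coeff q m) a * b^m)"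
proof -
  let ?r = "map_poly (\<lambda>c. poly c a) q"
  have d: "degree ?r \<le> degree q" by (rule map_poly_degree_leq)
  have "poly ?r b = poly (\<Sum>i\<le>degree q. monom (coeff ?r i) i) b"
    using poly_as_sum_of_monoms'[OF d] by simp
  also have "\<dots> = (\<Sum>m\<le>degree q. poly (coeff q m) a * b^m)"
    by (simp add: poly_sum poly_monom coeff_map_poly)
  finally show ?thesis unfolding qeval_def .
qed

lemma skew_iter: "(skew p q ^^ n) (z, w) = ((poly p ^^ n) z, Qiter p q n z w)"
proof (induction n arbitrary: z w)
  case 0 then show ?case by simp
next
  case (Suc n)
  have "(skew p q ^^ Suc n) (z, w) = (skew p q ^^ n) (skew p q (z,w))"
    by (simp only: funpow_Suc_right comp_def)
  also have "\<dots> = (skew p q ^^ n) (poly p z, qeval q z w)" by (simp add: skew_def)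
  also have "\<dots> = ((poly p ^^ Suc n) z, Qiter p q (Suc n) z w)"
    using Suc by (simp only: funpow_Suc_right comp_def Qiter.simps)
  finally show ?case .
qed

lemma poly_norm_bound:
  fixes c :: "complex poly"
  shows "\<exists>K\<ge>0. \<forall>z. 1 \<le> norm z \<longrightarrow> norm (poly c z) \<le> K * norm z ^ degree c"
proof (intro exI conjI allI impI)
  let ?K = "\<Sum>i\<le>degree c. norm (coeff c i)"
  show "0 \<le> ?K" by (simp add: sum_nonneg)
  fix z :: complex assume z: "1 \<le> norm z"
  have "norm (poly c z) \<le> (\<Sum>i\<le>degree c. norm (coeff c i * z ^ i))"
    unfolding poly_altdef by (rule norm_sum)
  also have "\<dots> \<le> (\<Sum>i\<le>degree c. norm (coeff c i) * norm z ^ degree c)"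
    by (intro sum_mono) (auto simp: norm_mult norm_power intro!: mult_left_mono power_increasing z)
  also have "\<dots> = ?K * norm z ^ degree c" by (simp add: sum_distrib_right)
  finally show "norm (poly c z) \<le> ?K * norm z ^ degree c" .
qed

lemma monic_bound:
  fixes a :: "complex poly"
  assumes "lead_coeff a = 1"
  shows "\<exists>R\<ge>1. \<forall>z. R \<le> norm z \<longrightarrow> norm z ^ degree a / 2 \<le> norm (poly a z) \<and> norm (poly a z) \<le> 2 * norm z ^ degree a"
proof -
  let ?k = "degree a"
  let ?T = "\<Sum>i<?k. norm (coeff a i)"
  have T0: "0 \<le> ?T" by (simp add: sum_nonneg)
  show ?thesis
  proof (intro exI[of _ "max 1 (2 * ?T)"] conjI allI impI)
    show "1 \<le> max 1 (2 * ?T)" by simp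
    fix z :: complex assume z: "max 1 (2 * ?T) \<le> norm z"
    have z1: "1 \<le> norm z" using z by simp
    have split: "poly a z = z ^ ?k + (\<Sum>i<?k. coeff a i * z ^ i)"
      unfolding poly_altdef using assms by (simp add: lessThan_Suc_atMost[symmetric] add.commute)
    have tail: "norm (\<Sum>i<?k. coeff a i * z ^ i) \<le> ?T * norm z ^ (?k - 1)"
    proof -
      have "norm (\<Sum>i<?k. coeff a i * z ^ i) \<le> (\<Sum>i<?k. norm (coeff a i * z ^ i))" by (rule norm_sum)
      also have "\<dots> \<le> (\<Sum>i<?k. norm (coeff a i) * norm z ^ (?k - 1))"
        by (intro sum_mono) (auto simp: norm_mult norm_power intro!: mult_left_mono power_increasing z1)
      also have "\<dots> = ?T * norm z ^ (?k - 1)" by (simp add: sum_distrib_right)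
      finally show ?thesis .
    qed
    have tail2: "?T * norm z ^ (?k - 1) \<le> norm z ^ ?k / 2"
    proof (cases "?k = 0")
      case True then show ?thesis by simp
    next
      case False
      then have e: "norm z ^ ?k = norm z * norm z ^ (?k - 1)"
        by (metis power_eq_if)
      have "2 * ?T * norm z ^ (?k - 1) \<le> norm z * norm z ^ (?k - 1)"
        by (intro mult_right_mono) (use z in auto)
      then show ?thesis using e by simp
    qed
    have nk: "norm (z ^ ?k) = norm z ^ ?k" by (simp add: norm_power)
    have "norm (poly a z) \<ge> norm z ^ ?k - norm (\<Sum>i<?k. coeff a i * z ^ i)"
      unfolding split using norm_triangle_ineq2[of "z ^ ?k" "- (\<Sum>i<?k. coeff a i * z ^ i)"] nk
      by (simp add: norm_minus_cancel)
    moreover have "norm (poly a z) \<le> norm z ^ ?k + norm (\<Sum>i<?k. coeff a i * z ^ i)"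
      unfolding split using norm_triangle_ineq[of "z ^ ?k"] nk by simp
    ultimately show "norm z ^ ?k / 2 \<le> norm (poly a z)" "norm (poly a z) \<le> 2 * norm z ^ ?k"
      using tail tail2 by auto
  qed
qed

lemma alpha_bound:
  fixes q :: "complex poly poly"
  assumes "degree q < \<delta>" "m \<le> degree q" "coeff q m \<noteq> 0"
  shows "real (degree (coeff q m)) \<le> alpha_exp \<delta> q * (real \<delta> - real m)"
proof -
  define S where "S = {real n / (real \<delta> - real m) | n m. coeff (coeff q m) n \<noteq> 0}"
  define D where "D = (\<Sum>m\<le>degree q. degree (coeff q m))"
  have "S \<subseteq> (\<lambda>(n,m). real n / (real \<delta> - real m)) ` ({..D} \<times> {..degree q})"
  proof
    fix x assume "x \<in> S"
    then obtain n m' where x: "x = real n / (real \<delta> - real m')" and c: "coeff (coeff q m') n \<noteq> 0"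
      unfolding S_def by blast
    have m': "m' \<le> degree q" using c by (metis coeff_0 le_degree)
    have "n \<le> degree (coeff q m')" using c by (rule le_degree)
    also have "\<dots> \<le> D" unfolding D_def using m' by (intro member_le_sum) auto
    finally show "x \<in> (\<lambda>(n,m). real n / (real \<delta> - real m)) ` ({..D} \<times> {..degree q})"
      using x m' by force
  qed
  then have fin: "finite S" by (rule finite_subset) auto
  have mem: "real (degree (coeff q m)) / (real \<delta> - real m) \<in> S"
    unfolding S_def using assms(3) by (intro CollectI exI[of _ "degree (coeff q m)"] exI[of _ m]) auto
  have "real (degree (coeff q m)) / (real \<delta> - real m) \<le> alpha_exp \<delta> q"
    unfolding alpha_exp_def S_def[symmetric] using fin mem by (rule Max_ge)
  moreover have "real \<delta> - real m > 0" using assms by simp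
  ultimately show ?thesis by (simp add: pos_divide_le_eq mult.commute)
qed

lemma pow_powr: "0 < (Z::real) \<Longrightarrow> (Z^n) powr A = (Z powr A)^n"
  by (simp add: powr_realpow[symmetric] powr_powr powr_power mult.commute)

lemma coeff_bound:
  fixes q :: "complex poly poly"
  assumes "degree q < \<delta>" "0 \<le> alpha_exp \<delta> q"
  shows "\<exists>K\<ge>0. \<forall>z m. 1 \<le> norm z \<longrightarrow> m \<le> degree q \<longrightarrow>
           norm (poly (coeff q m) z) \<le> K * (norm z powr alpha_exp \<delta> q)^(\<delta> - m)"
proof -
  let ?A = "alpha_exp \<delta> q"
  have "\<forall>m. \<exists>K\<ge>0. \<forall>z. 1 \<le> norm z \<longrightarrow> norm (poly (coeff q m) z) \<le> K * norm z ^ degree (coeff q m)"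
    using poly_norm_bound by blast
  then obtain Kf where Kf: "\<And>m. Kf m \<ge> 0" "\<And>m z. 1 \<le> norm z \<Longrightarrow> norm (poly (coeff q m) z) \<le> Kf m * norm z ^ degree (coeff q m)"
    by metis
  define K where "K = (\<Sum>m\<le>degree q. Kf m)"
  show ?thesis
  proof (intro exI[of _ K] conjI allI impI)
    show K0: "0 \<le> K" unfolding K_def using Kf(1) by (simp add: sum_nonneg)
    fix z :: complex and m assume z: "1 \<le> norm z" and m: "m \<le> degree q"
    have znz: "z \<noteq> 0" using z by (metis norm_zero not_one_le_zero)
    have tpos: "0 \<le> K * (norm z powr ?A)^(\<delta> - m)" unfolding K_def using Kf(1)
      by (intro mult_nonneg_nonneg zero_le_power sum_nonneg) (auto simp: znz)
    show "norm (poly (coeff q m) z) \<le> K * (norm z powr ?A)^(\<delta> - m)"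
    proof (cases "coeff q m = 0")
      case True then show ?thesis using tpos by simp
    next
      case False
      have z0: "norm z > 0" using znz by simp
      have "norm z ^ degree (coeff q m) = norm z powr real (degree (coeff q m))"
        using z0 by (simp add: powr_realpow)
      also have "\<dots> \<le> norm z powr (?A * (real \<delta> - real m))"
        using alpha_bound[OF assms(1) m False] z by (intro powr_mono) auto
      also have "?A * (real \<delta> - real m) = real (\<delta> - m) * ?A" using m assms(1) by (simp add: of_nat_diff)
      also have "norm z powr \<dots> = (norm z powr ?A)^(\<delta> - m)" using z0 by (simp add: powr_power)
      finally have zz: "norm z ^ degree (coeff q m) \<le> (norm z powr ?A)^(\<delta> - m)" .
      have Km: "Kf m \<le> K" unfolding K_def using m Kf(1) by (intro member_le_sum) auto
      have "norm (poly (coeff q m) z) \<le> Kf m * norm z ^ degree (coeff q m)" by (rule Kf(2)[OF z])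
      also have "\<dots> \<le> K * (norm z powr ?A)^(\<delta> - m)"
        using Km zz Kf(1) K0 by (intro mult_mono) auto
      finally show ?thesis .
    qed
  qed
qed

lemma logplus_nonneg: "0 \<le> logplus x" by (simp add: logplus_def)

lemma logplus_mono: "0 \<le> x \<Longrightarrow> x \<le> y \<Longrightarrow> logplus x \<le> logplus y"
proof (cases "x = 0")
  case True then show ?thesis by (simp add: logplus_def)
next
  case False
  assume "0 \<le> x" "x \<le> y"
  with False have "ln x \<le> ln y" by simp
  then show ?thesis by (auto simp: logplus_def max_def)
qed

lemma logplus_ge_ln: "x > 0 \<Longrightarrow> ln x \<le> logplus x" by (simp add: logplus_def)

lemma logplus_max: "0 \<le> r \<Longrightarrow> logplus r = ln (max 1 r)"
  unfolding logplus_def by (cases "r = 0") (auto simp: max_def)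

lemma step_real:
  fixes d \<delta> :: nat and K u :: real
  assumes d: "d \<ge> 1" and K: "K \<ge> 0" and u: "u \<ge> 1"
  shows "\<exists>C\<ge>0. \<forall>t r P Q. t > 0 \<and> r \<ge> 0 \<and> 0 \<le> Q \<and> t^\<delta>/u \<le> P \<and> P \<le> u*t^\<delta>
     \<and> Q \<le> K*t^\<delta>*(\<Sum>m\<le>d. r^m) \<and> t^\<delta>*(r^d/2 - K*(\<Sum>m<d. r^m)) \<le> Q
     \<longrightarrow> \<bar>logplus (Q/P) - real d * logplus r\<bar> \<le> C"
proof -
  define K1 where "K1 = max 1 K"
  define r0 where "r0 = 4*K1*d"
  have K1: "K1 \<ge> 1" "K \<le> K1" by (auto simp: K1_def)
  have dr: "real d \<ge> 1" using d by simp
  have r0: "r0 \<ge> 1"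
  proof -
    have "1 * 1 \<le> K1 * real d" using mult_mono[of 1 K1 1 "real d"] K1 dr by simp
    then show ?thesis unfolding r0_def by simp
  qed
  define C where "C = ln (u*K1*(d+1)) + d * ln r0 + ln (4*u)"
  have B1: "1 \<le> u*K1*(d+1)"
  proof -
    have "1 * 1 \<le> u * K1" using mult_mono[of 1 u 1 K1] u K1 by simp
    moreover have "1 \<le> real d + 1" by simp
    ultimately have "1 * 1 \<le> (u*K1) * (real d + 1)" using mult_mono[of 1 "u*K1" 1 "real d + 1"] by simp
    then show ?thesis by (simp add: add.commute)
  qed
  have lnA: "0 \<le> ln (u*K1*(d+1))" using B1 by simp
  have lnB: "0 \<le> d * ln r0" using r0 by simp
  have lnC: "0 \<le> ln (4*u)" using u by simp
  have C0: "C \<ge> 0" unfolding C_def using lnA lnB lnC by linarith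
  show ?thesis
  proof (intro exI[of _ C] conjI allI impI)
    show "0 \<le> C" by (rule C0)
    fix t r P Q :: real
    assume H: "t > 0 \<and> r \<ge> 0 \<and> 0 \<le> Q \<and> t^\<delta>/u \<le> P \<and> P \<le> u*t^\<delta>
     \<and> Q \<le> K*t^\<delta>*(\<Sum>m\<le>d. r^m) \<and> t^\<delta>*(r^d/2 - K*(\<Sum>m<d. r^m)) \<le> Q"
    then have t: "t > 0" and r: "r \<ge> 0" and Q0: "0 \<le> Q" and P1: "t^\<delta>/u \<le> P" and P2: "P \<le> u*t^\<delta>"
      and Q1: "Q \<le> K*t^\<delta>*(\<Sum>m\<le>d. r^m)" and Q2: "t^\<delta>*(r^d/2 - K*(\<Sum>m<d. r^m)) \<le> Q" by auto
    have tp: "t^\<delta> > 0" using t by simp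
    have tpu: "t^\<delta>/u > 0" using tp u by simp
    have P0: "P > 0" using P1 tpu by linarith
    define M where "M = max 1 r"
    have M1: "M \<ge> 1" "r \<le> M" by (auto simp: M_def)
    have S: "(\<Sum>m\<le>d. r^m) \<le> (d+1) * M^d"
    proof -
      have "(\<Sum>m\<le>d. r^m) \<le> (\<Sum>m\<le>d. M^d)"
      proof (intro sum_mono)
        fix m assume "m \<in> {..d}"
        then have "r^m \<le> M^m" "M^m \<le> M^d" using r M1 by (auto intro: power_mono power_increasing)
        then show "r^m \<le> M^d" by linarith
      qed
      then show ?thesis by simp
    qed
    have "Q/P \<le> (K*t^\<delta>*(\<Sum>m\<le>d. r^m)) / (t^\<delta>/u)"
      using Q1 P1 Q0 tp u by (intro frac_le) auto
    also have "\<dots> = u*K*(\<Sum>m\<le>d. r^m)" using tp u t by (simp add: field_simps)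
    also have "\<dots> \<le> u*K1*((d+1)*M^d)"
      using S K1 u K by (intro mult_mono) (auto simp: sum_nonneg r)
    finally have up: "Q/P \<le> u*K1*(d+1)*M^d" by simp
    have "logplus (Q/P) \<le> logplus (u*K1*(d+1)*M^d)"
      using up Q0 P0 by (intro logplus_mono) auto
    also have "\<dots> = ln (u*K1*(d+1)) + d * ln M"
    proof -
      have "M^d \<ge> 1" using M1 by simp
      then have "1 * 1 \<le> (u*K1*(d+1))*M^d" using B1 by (intro mult_mono) auto
      then have "1 \<le> u*K1*(d+1)*M^d" by simp
      then have "logplus (u*K1*(d+1)*M^d) = ln (u*K1*(d+1)*M^d)" unfolding logplus_def by simp
      also have "\<dots> = ln (u*K1*(d+1)) + ln (M^d)" using B1 M1 by (subst ln_mult) auto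
      also have "\<dots> = ln (u*K1*(d+1)) + d * ln M" using M1 by (simp add: ln_realpow)
      finally show ?thesis .
    qed
    finally have upper: "logplus (Q/P) - d * logplus r \<le> C"
      unfolding C_def using logplus_max[OF r] lnB lnC M_def by simp
    have lower: "d * logplus r - logplus (Q/P) \<le> C"
    proof (cases "r \<le> r0")
      case True
      have "d * logplus r \<le> d * logplus r0" using True r by (intro mult_left_mono logplus_mono) auto
      also have "\<dots> = d * ln r0" using r0 unfolding logplus_def by simp
      finally show ?thesis unfolding C_def using lnA lnC logplus_nonneg[of "Q/P"] by linarith
    next
      case False
      then have rr: "r > r0" "r \<ge> 1" using r0 by auto
      have S2: "(\<Sum>m<d. r^m) \<le> d * r^(d-1)"
      proof -
        have "(\<Sum>m<d. r^m) \<le> (\<Sum>m<d. r^(d-1))"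
          by (intro sum_mono power_increasing) (use rr in auto)
        then show ?thesis by simp
      qed
      obtain d' where d': "d = Suc d'" using d by (cases d) auto
      have rd: "r^d = r * r^(d-1)" unfolding d' by simp
      have "K*(\<Sum>m<d. r^m) \<le> K1 * (d * r^(d-1))"
        using S2 K1 K r by (intro mult_mono) (auto intro!: sum_nonneg)
      also have "\<dots> = r0/4 * r^(d-1)" by (simp add: r0_def)
      also have "\<dots> \<le> r/4 * r^(d-1)" using rr by (intro mult_right_mono) auto
      finally have "K*(\<Sum>m<d. r^m) \<le> r^d/4" using rd by simp
      then have "r^d/4 \<le> r^d/2 - K*(\<Sum>m<d. r^m)" by linarith
      then have "t^\<delta> * (r^d/4) \<le> t^\<delta> * (r^d/2 - K*(\<Sum>m<d. r^m))" using tp by (intro mult_left_mono) auto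
      then have "t^\<delta> * (r^d/4) \<le> Q" using Q2 by linarith
      then have "(t^\<delta> * (r^d/4)) / (u*t^\<delta>) \<le> Q/P"
        using P2 P0 tp rr Q0 by (intro frac_le) auto
      moreover have "(t^\<delta> * (r^d/4)) / (u*t^\<delta>) = r^d/(4*u)" using tp t by (simp add: field_simps)
      ultimately have qp: "r^d/(4*u) \<le> Q/P" by simp
      have rdp: "r^d/(4*u) > 0" using rr u by simp
      have "ln (r^d/(4*u)) \<le> ln (Q/P)" using qp rdp by simp
      moreover have "ln (r^d/(4*u)) = d * ln r - ln (4*u)" using rr u by (simp add: ln_div ln_realpow)
      moreover have "ln (Q/P) \<le> logplus (Q/P)" using qp rdp by (intro logplus_ge_ln) auto
      moreover have lr: "logplus r = ln r" using rr unfolding logplus_def by simp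
      ultimately show ?thesis unfolding C_def lr using lnA lnB by linarith
    qed
    show "\<bar>logplus (Q/P) - real d * logplus r\<bar> \<le> C" using upper lower by linarith
  qed
qed

lemma step_complex:
  fixes p :: "complex poly" and q :: "complex poly poly"
  assumes p1: "lead_coeff p = 1" and p2: "degree p \<ge> 2"
    and q2: "degree q \<ge> 2" and b1: "lead_coeff (lead_coeff q) = 1"
    and pq: "degree p > degree q"
    and al: "alpha_exp (degree p) q = real (degree (lead_coeff q)) / (real (degree p) - real (degree q))"
  shows "\<exists>R\<ge>1. \<exists>C. \<forall>a b. R \<le> norm a \<longrightarrow> norm a \<le> norm (poly p a) \<and>
     \<bar>logplus (norm (qeval q a b) / norm (poly p a) powr alpha_exp (degree p) q)
       - real (degree q) * logplus (norm b / norm a powr alpha_exp (degree p) q)\<bar> \<le> C"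
proof -
  define \<delta> where "\<delta> = degree p"
  define d where "d = degree q"
  define \<gamma> where "\<gamma> = degree (lead_coeff q)"
  define A where "A = alpha_exp \<delta> q"
  have dd: "d < \<delta>" "d \<ge> 1" "\<delta> \<ge> 2" using pq q2 p2 by (auto simp: d_def \<delta>_def)
  have Aeq: "A = real \<gamma> / (real \<delta> - real d)" using al by (simp add: A_def \<delta>_def d_def \<gamma>_def)
  have A0: "A \<ge> 0" using Aeq dd by simp
  have gam: "real \<gamma> = A * (real \<delta> - real d)" using Aeq dd by simp
  obtain Rp where Rp: "Rp \<ge> 1" "\<And>z. Rp \<le> norm z \<Longrightarrow> norm z ^ \<delta> / 2 \<le> norm (poly p z) \<and> norm (poly p z) \<le> 2 * norm z ^ \<delta>"
    using monic_bound[OF p1] unfolding \<delta>_def by blast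
  obtain Rb where Rb: "Rb \<ge> 1" "\<And>z. Rb \<le> norm z \<Longrightarrow> norm z ^ \<gamma> / 2 \<le> norm (poly (lead_coeff q) z) \<and> norm (poly (lead_coeff q) z) \<le> 2 * norm z ^ \<gamma>"
    using monic_bound[OF b1] unfolding \<gamma>_def by blast
  obtain K where K: "K \<ge> 0" "\<And>z m. 1 \<le> norm z \<Longrightarrow> m \<le> d \<Longrightarrow> norm (poly (coeff q m) z) \<le> K * (norm z powr A)^(\<delta> - m)"
    using coeff_bound[of q \<delta>] dd A0 unfolding A_def d_def by blast
  define u where "u = (2::real) powr A"
  have u1: "u \<ge> 1" unfolding u_def using A0 by (simp add: ge_one_powr_ge_zero)
  obtain C where C: "\<And>t r P Q. t > 0 \<and> r \<ge> 0 \<and> 0 \<le> Q \<and> t^\<delta>/u \<le> P \<and> P \<le> u*t^\<delta>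
     \<and> Q \<le> K*t^\<delta>*(\<Sum>m\<le>d. r^m) \<and> t^\<delta>*(r^d/2 - K*(\<Sum>m<d. r^m)) \<le> Q
     \<Longrightarrow> \<bar>logplus (Q/P) - real d * logplus r\<bar> \<le> C"
    using step_real[OF dd(2) K(1) u1, of \<delta>] by blast
  define R where "R = max (max Rp Rb) 4"
  have R1: "1 \<le> R" unfolding R_def by simp
  have main: "norm a \<le> norm (poly p a) \<and>
     \<bar>logplus (norm (qeval q a b) / norm (poly p a) powr alpha_exp (degree p) q)
       - real (degree q) * logplus (norm b / norm a powr alpha_exp (degree p) q)\<bar> \<le> C"
    if aR: "R \<le> norm a" for a b :: complex
  proof -
    define Z where "Z = norm a"
    have Z: "Z \<ge> 4" "Rp \<le> Z" "Rb \<le> Z" using aR unfolding R_def Z_def by auto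
    have Z0: "Z > 0" using Z by simp
    have pa: "Z ^ \<delta> / 2 \<le> norm (poly p a)" "norm (poly p a) \<le> 2 * Z ^ \<delta>" using Rp(2)[of a] Z unfolding Z_def by auto
    have ba: "Z ^ \<gamma> / 2 \<le> norm (poly (lead_coeff q) a)" using Rb(2)[of a] Z unfolding Z_def by auto
    have s1: "norm a \<le> norm (poly p a)"
    proof -
      have "Z^2 \<le> Z^\<delta>" using Z dd by (intro power_increasing) auto
      moreover have "Z^2 = Z * Z" by (simp add: power2_eq_square)
      moreover have "4 * Z \<le> Z * Z" using Z by (intro mult_right_mono) auto
      ultimately show ?thesis using pa unfolding Z_def by linarith
    qed
    define t where "t = Z powr A"
    define r where "r = norm b / t"
    define P where "P = norm (poly p a) powr A"
    define Q where "Q = norm (qeval q a b)"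
    have t0: "t > 0" unfolding t_def using Z0 by simp
    have r0: "r \<ge> 0" unfolding r_def using t0 by simp
    have bnorm: "norm b = r * t" unfolding r_def using t0 by simp
    have Zd: "(Z ^ \<delta>) powr A = t ^ \<delta>" unfolding t_def using Z0 by (rule pow_powr)
    have P1: "t^\<delta>/u \<le> P"
    proof -
      have "(Z ^ \<delta> / 2) powr A \<le> P" unfolding P_def using pa A0 Z0 by (intro powr_mono2) auto
      moreover have "(Z ^ \<delta> / 2) powr A = t^\<delta>/u" unfolding u_def using Z0 Zd by (simp add: powr_divide)
      ultimately show ?thesis by simp
    qed
    have P2: "P \<le> u*t^\<delta>"
    proof -
      have "P \<le> (2 * Z ^ \<delta>) powr A" unfolding P_def using pa A0 Z0 by (intro powr_mono2) auto
      moreover have "(2 * Z ^ \<delta>) powr A = u*t^\<delta>" unfolding u_def using Z0 Zd by (simp add: powr_mult)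
      ultimately show ?thesis by simp
    qed
    have tm: "norm (poly (coeff q m) a * b^m) \<le> K * t^\<delta> * r^m" if m: "m \<le> d" for m
    proof -
      have "norm (poly (coeff q m) a * b^m) = norm (poly (coeff q m) a) * (r*t)^m"
        by (simp add: norm_mult norm_power bnorm)
      also have "\<dots> \<le> K * t^(\<delta> - m) * (r*t)^m"
        using K(2)[of a m] m Z unfolding Z_def t_def by (intro mult_right_mono) (auto simp: r0 t0)
      also have "\<dots> = K * (t^(\<delta> - m) * t^m) * r^m" by (simp add: power_mult_distrib)
      also have "t^(\<delta> - m) * t^m = t^\<delta>" using m dd by (simp add: power_add[symmetric])
      finally show ?thesis .
    qed
    have qs: "qeval q a b = (\<Sum>m\<le>d. poly (coeff q m) a * b^m)" unfolding d_def by (rule qeval_sum)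
    have Q1: "Q \<le> K*t^\<delta>*(\<Sum>m\<le>d. r^m)"
    proof -
      have "Q \<le> (\<Sum>m\<le>d. norm (poly (coeff q m) a * b^m))" unfolding Q_def qs by (rule norm_sum)
      also have "\<dots> \<le> (\<Sum>m\<le>d. K * t^\<delta> * r^m)" by (intro sum_mono tm) auto
      also have "\<dots> = K*t^\<delta>*(\<Sum>m\<le>d. r^m)" by (simp add: sum_distrib_left)
      finally show ?thesis .
    qed
    have Q2: "t^\<delta>*(r^d/2 - K*(\<Sum>m<d. r^m)) \<le> Q"
    proof -
      have split: "qeval q a b = poly (lead_coeff q) a * b^d + (\<Sum>m<d. poly (coeff q m) a * b^m)"
        unfolding qs by (simp add: lessThan_Suc_atMost[symmetric] d_def)
      have rest: "norm (\<Sum>m<d. poly (coeff q m) a * b^m) \<le> K*t^\<delta>*(\<Sum>m<d. r^m)"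
      proof -
        have "norm (\<Sum>m<d. poly (coeff q m) a * b^m) \<le> (\<Sum>m<d. norm (poly (coeff q m) a * b^m))" by (rule norm_sum)
        also have "\<dots> \<le> (\<Sum>m<d. K * t^\<delta> * r^m)" by (intro sum_mono tm) auto
        also have "\<dots> = K*t^\<delta>*(\<Sum>m<d. r^m)" by (simp add: sum_distrib_left)
        finally show ?thesis .
      qed
      have Zg: "Z ^ \<gamma> = t ^ (\<delta> - d)"
      proof -
        have "Z ^ \<gamma> = Z powr real \<gamma>" using Z0 by (simp add: powr_realpow)
        also have "\<dots> = Z powr (real (\<delta> - d) * A)" using gam dd by (simp add: of_nat_diff mult.commute)
        also have "\<dots> = t ^ (\<delta> - d)" unfolding t_def using Z0 by (simp add: powr_power)
        finally show ?thesis .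
      qed
      have lead: "t^\<delta> * r^d / 2 \<le> norm (poly (lead_coeff q) a * b^d)"
      proof -
        have "t^\<delta> * r^d / 2 = (Z ^ \<gamma> / 2) * (r*t)^d"
          unfolding Zg using dd by (simp add: power_mult_distrib power_add[symmetric])
        also have "\<dots> \<le> norm (poly (lead_coeff q) a) * (r*t)^d"
          using ba r0 t0 by (intro mult_right_mono) (simp_all)
        also have "\<dots> = norm (poly (lead_coeff q) a * b^d)" by (simp add: norm_mult norm_power bnorm)
        finally show ?thesis .
      qed
      have "norm (poly (lead_coeff q) a * b^d) - norm (\<Sum>m<d. poly (coeff q m) a * b^m)
         \<le> norm (poly (lead_coeff q) a * b^d + (\<Sum>m<d. poly (coeff q m) a * b^m))"
        by (rule norm_diff_ineq)
      then have X: "norm (poly (lead_coeff q) a * b^d) - norm (\<Sum>m<d. poly (coeff q m) a * b^m) \<le> Q"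
        unfolding Q_def split .
      have E: "t^\<delta>*(r^d/2 - K*(\<Sum>m<d. r^m)) = t^\<delta> * r^d / 2 - K*t^\<delta>*(\<Sum>m<d. r^m)"
        by (simp add: algebra_simps)
      show ?thesis unfolding E using X lead rest by linarith
    qed
    have "\<bar>logplus (Q/P) - real d * logplus r\<bar> \<le> C"
      by (rule C) (use t0 r0 P1 P2 Q1 Q2 in \<open>auto simp: Q_def\<close>)
    then have s2: "\<bar>logplus (norm (qeval q a b) / norm (poly p a) powr alpha_exp (degree p) q)
       - real (degree q) * logplus (norm b / norm a powr alpha_exp (degree p) q)\<bar> \<le> C"
      unfolding Q_def P_def r_def t_def Z_def A_def \<delta>_def d_def .
    show ?thesis using s1 s2 by blast
  qed
  show ?thesis using R1 main by blast
qed

lemma cont_iter: "continuous_on UNIV (\<lambda>x. (poly (p::complex poly) ^^ n) x)"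
proof (induction n)
  case 0 then show ?case by (simp add: continuous_on_id)
next
  case (Suc n)
  have "continuous_on UNIV (\<lambda>x. poly p ((poly p ^^ n) x))"
    by (rule continuous_on_poly) (use Suc in simp)
  then show ?case by simp
qed

lemma uniform_escape:
  fixes p :: "complex poly" and V :: "complex set"
  assumes R: "\<And>a. R \<le> norm a \<Longrightarrow> norm a \<le> norm (poly p a)"
    and V: "closure V \<subseteq> escape_set p"
  shows "\<exists>N. \<forall>z\<in>V. \<forall>n\<ge>N. R \<le> norm ((poly p ^^ n) z)"
proof -
  define U where "U n = {z. R < norm ((poly p ^^ n) z)}" for n
  have opn: "open (U n)" for n
    unfolding U_def by (intro open_Collect_less continuous_on_const continuous_on_norm cont_iter)
  have U_Suc: "U n \<subseteq> U (Suc n)" for n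
  proof
    fix z assume "z \<in> U n"
    then have "R < norm ((poly p ^^ n) z)" by (simp add: U_def)
    moreover have "norm ((poly p ^^ n) z) \<le> norm (poly p ((poly p ^^ n) z))"
      using R calculation by simp
    ultimately show "z \<in> U (Suc n)" by (simp add: U_def)
  qed
  have U_mono: "n \<le> m \<Longrightarrow> U n \<subseteq> U m" for n m
    by (rule lift_Suc_mono_le[of U]) (use U_Suc in auto)
  define K where "K = closure V \<inter> cball 0 R"
  have cK: "compact K" unfolding K_def by (intro closed_Int_compact) auto
  have cov: "K \<subseteq> (\<Union>n\<in>UNIV. U n)"
  proof
    fix z assume "z \<in> K"
    then have "z \<in> escape_set p" using V unfolding K_def by auto
    then have "filterlim (\<lambda>n. norm ((poly p ^^ n) z)) at_top sequentially" by (simp add: escape_set_def)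
    then have "eventually (\<lambda>n. R < norm ((poly p ^^ n) z)) sequentially"
      by (simp add: filterlim_at_top_dense)
    then obtain n where "R < norm ((poly p ^^ n) z)" by (auto simp: eventually_sequentially)
    then show "z \<in> (\<Union>n\<in>UNIV. U n)" by (auto simp: U_def)
  qed
  obtain C' where C'': "C' \<subseteq> UNIV" "finite C'" "K \<subseteq> (\<Union>n\<in>C'. U n)"
    by (rule compactE_image[OF cK, of UNIV U]) (use opn cov in auto)
  have C': "finite C'" "K \<subseteq> (\<Union>n\<in>C'. U n)" using C'' by auto
  define N where "N = Max (insert 0 C')"
  have KN: "K \<subseteq> U N"
  proof
    fix z assume "z \<in> K"
    then obtain n where "n \<in> C'" "z \<in> U n" using C' by auto
    moreover have "n \<le> N" unfolding N_def using C'(1) \<open>n \<in> C'\<close> by simp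
    ultimately show "z \<in> U N" using U_mono by blast
  qed
  show ?thesis
  proof (intro exI[of _ N] ballI allI impI)
    fix z n assume z: "z \<in> V" and n: "N \<le> n"
    have "z \<in> U N"
    proof (cases "norm z \<le> R")
      case True
      then have "z \<in> K" using z closure_subset unfolding K_def by auto
      then show ?thesis using KN by auto
    next
      case False
      then have "z \<in> U 0" by (simp add: U_def)
      then show ?thesis using U_mono[of 0 N] by auto
    qed
    then have "z \<in> U n" using U_mono[OF n] by auto
    then show "R \<le> norm ((poly p ^^ n) z)" by (simp add: U_def)
  qed
qed

theorem proposition4p12:
  fixes p :: "complex poly" and q :: "complex poly poly" and V :: "complex set"
  assumes "lead_coeff p = 1" and "degree p \<ge> 2"
    and "degree q \<ge> 2" and "lead_coeff (lead_coeff q) = 1"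
    and "degree p > degree q"
    and "alpha_exp (degree p) q = real (degree (lead_coeff q)) / (real (degree p) - real (degree q))"
    and "\<not> poly_product q"
    and "closure V \<subseteq> escape_set p"
  shows "uniform_limit (V \<times> UNIV)
     (\<lambda>n (z, w). logplus (norm (snd ((skew p q ^^ n) (z, w)))
                  / norm (fst ((skew p q ^^ n) (z, w))) powr alpha_exp (degree p) q)
                / real (degree q) ^ n)
     (\<lambda>(z, w). lim (\<lambda>n. logplus (norm (Qiter p q n z w)
                  / norm ((poly p ^^ n) z) powr alpha_exp (degree p) q) / real (degree q) ^ n))
     sequentially"
proof -
  define A where "A = alpha_exp (degree p) q"
  define d where "d = degree q"
  define G where "G = (\<lambda>n (z, w). logplus (norm (snd ((skew p q ^^ n) (z, w)))
                  / norm (fst ((skew p q ^^ n) (z, w))) powr alpha_exp (degree p) q)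
                / real (degree q) ^ n)"
  have d2: "real d \<ge> 2" using assms(3) by (simp add: d_def)
  have dpos: "real d > 0" using d2 by simp
  obtain R C0 where R: "R \<ge> 1" and RC: "\<And>a b. R \<le> norm a \<Longrightarrow> norm a \<le> norm (poly p a) \<and>
     \<bar>logplus (norm (qeval q a b) / norm (poly p a) powr A)
       - real d * logplus (norm b / norm a powr A)\<bar> \<le> C0"
    using step_complex[OF assms(1-6)] unfolding A_def d_def by blast
  define C where "C = max C0 0"
  have C0: "C \<ge> 0" by (simp add: C_def)
  obtain N where N: "\<And>z n. z \<in> V \<Longrightarrow> N \<le> n \<Longrightarrow> R \<le> norm ((poly p ^^ n) z)"
    using uniform_escape[of R p V] RC assms(8) by blast
  have Gdef: "G n (z, w) = logplus (norm (Qiter p q n z w) / norm ((poly p ^^ n) z) powr A) / real d ^ n" for n z w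
    unfolding G_def A_def d_def by (simp add: skew_iter)
  have gstep: "\<bar>G (Suc n) x - G n x\<bar> \<le> C / real d ^ Suc n" if x: "x \<in> V \<times> UNIV" and n: "N \<le> n" for x n
  proof -
    obtain z w where xz: "x = (z, w)" and z: "z \<in> V" using x by auto
    define a where "a = fst ((skew p q ^^ n) (z, w))"
    define b where "b = snd ((skew p q ^^ n) (z, w))"
    have ab: "(skew p q ^^ n) (z, w) = (a, b)" by (simp add: a_def b_def)
    have aR: "R \<le> norm a" using N[OF z n] by (simp add: a_def skew_iter)
    have s1: "(skew p q ^^ Suc n) (z, w) = (poly p a, qeval q a b)"
    proof -
      have "(skew p q ^^ Suc n) (z, w) = skew p q ((skew p q ^^ n) (z, w))" by simp
      also have "\<dots> = (poly p a, qeval q a b)" unfolding ab by (simp add: skew_def)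
      finally show ?thesis .
    qed
    have G1: "G (Suc n) x = logplus (norm (qeval q a b) / norm (poly p a) powr A) / real d ^ Suc n"
      unfolding xz G_def A_def d_def by (simp add: s1 del: funpow.simps)
    have G0: "G n x = real d * logplus (norm b / norm a powr A) / real d ^ Suc n"
      unfolding xz G_def A_def d_def using dpos by (simp add: d_def ab)
    have "G (Suc n) x - G n x = (logplus (norm (qeval q a b) / norm (poly p a) powr A)
       - real d * logplus (norm b / norm a powr A)) / real d ^ Suc n"
      unfolding G1 G0 by (simp add: diff_divide_distrib)
    then have "\<bar>G (Suc n) x - G n x\<bar> = \<bar>logplus (norm (qeval q a b) / norm (poly p a) powr A)
       - real d * logplus (norm b / norm a powr A)\<bar> / real d ^ Suc n"
      using dpos by simp
    also have "\<dots> \<le> C / real d ^ Suc n"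
      using RC[OF aR, of b] dpos unfolding C_def by (intro divide_right_mono) auto
    finally show ?thesis .
  qed
  have cauchy: "\<bar>G m x - G n x\<bar> \<le> C * (1 / real d ^ n - 1 / real d ^ m)"
    if x: "x \<in> V \<times> UNIV" and n: "N \<le> n" and nm: "n \<le> m" for x n m
    using nm
  proof (induction m rule: dec_induct)
    case base then show ?case by simp
  next
    case (step m)
    have "\<bar>G (Suc m) x - G n x\<bar> \<le> \<bar>G m x - G n x\<bar> + \<bar>G (Suc m) x - G m x\<bar>" by linarith
    also have "\<dots> \<le> C * (1 / real d ^ n - 1 / real d ^ m) + C / real d ^ Suc m"
      using step.IH gstep[OF x, of m] step.hyps n by (intro add_mono) auto
    also have "\<dots> \<le> C * (1 / real d ^ n - 1 / real d ^ Suc m)"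
    proof -
      define bb where "bb = 1 / real d ^ m"
      have bb0: "bb \<ge> 0" unfolding bb_def by simp
      have cc: "1 / real d ^ Suc m = (1 / real d) * bb" unfolding bb_def by simp
      have "1 / real d \<le> 1 / 2" using d2 by (intro divide_left_mono) auto
      then have "(1 / real d) * bb \<le> (1/2) * bb" using bb0 by (intro mult_right_mono) auto
      then have "2 * (1 / real d ^ Suc m) \<le> bb" unfolding cc by (simp add: mult.commute)
      then have "C * (2 * (1 / real d ^ Suc m)) \<le> C * bb" using C0 by (intro mult_left_mono) auto
      then have h: "2 * (C * (1 / real d ^ Suc m)) \<le> C * bb" by (simp add: algebra_simps)
      have e1: "C * (1 / real d ^ n - 1 / real d ^ m) = C * (1 / real d ^ n) - C * bb"
        unfolding bb_def by (simp add: right_diff_distrib)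
      have e2: "C * (1 / real d ^ n - 1 / real d ^ Suc m) = C * (1 / real d ^ n) - C * (1 / real d ^ Suc m)"
        by (simp add: right_diff_distrib)
      have e3: "C / real d ^ Suc m = C * (1 / real d ^ Suc m)" by simp
      show ?thesis unfolding e1 e2 e3 using h by linarith
    qed
    finally show ?case .
  qed
  have uc: "uniformly_Cauchy_on (V \<times> UNIV) G"
  proof (rule uniformly_Cauchy_onI')
    fix e :: real assume e: "e > 0"
    obtain M0 where M0: "(C + 1) / e < real d ^ M0" using real_arch_pow[of "real d" "(C+1)/e"] d2 by auto
    define M where "M = max M0 N"
    have dM: "C / real d ^ M < e"
    proof -
      have "real d ^ M0 \<le> real d ^ M" unfolding M_def using d2 by (intro power_increasing) auto
      then have "(C + 1) / e < real d ^ M" using M0 by linarith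
      then have "C + 1 < e * real d ^ M" using e by (simp add: field_simps)
      then show ?thesis using dpos by (simp add: field_simps)
    qed
    show "\<exists>M. \<forall>x\<in>V \<times> UNIV. \<forall>m\<ge>M. \<forall>n>m. dist (G m x) (G n x) < e"
    proof (intro exI[of _ M] ballI allI impI)
      fix x :: "complex \<times> complex" and m n assume x: "x \<in> V \<times> UNIV" and m: "M \<le> m" and mn: "m < n"
      have "dist (G m x) (G n x) = \<bar>G n x - G m x\<bar>" by (simp add: dist_real_def abs_minus_commute)
      also have "\<dots> \<le> C * (1 / real d ^ m - 1 / real d ^ n)"
        using cauchy[OF x _ less_imp_le[OF mn]] m unfolding M_def by auto
      also have "\<dots> \<le> C / real d ^ m"
      proof -
        have nn: "0 \<le> C * (1 / real d ^ n)" using C0 dpos by simp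
        have "C * (1 / real d ^ m - 1 / real d ^ n) = C / real d ^ m - C * (1 / real d ^ n)"
          by (simp add: right_diff_distrib)
        then show ?thesis using nn by simp
      qed
      also have "\<dots> \<le> C / real d ^ M" using C0 dpos d2 m by (intro divide_left_mono power_increasing mult_pos_pos) auto
      also have "\<dots> < e" by (rule dM)
      finally show "dist (G m x) (G n x) < e" .
    qed
  qed
  have UL: "uniform_limit (V \<times> UNIV) G (\<lambda>x. lim (\<lambda>n. G n x)) sequentially"
    using Cauchy_uniformly_convergent[OF uc] uniformly_convergent_uniform_limit_iff by blast
  have EQ: "(\<lambda>x. lim (\<lambda>n. G n x)) = (\<lambda>(z, w). lim (\<lambda>n. logplus (norm (Qiter p q n z w)
                  / norm ((poly p ^^ n) z) powr alpha_exp (degree p) q) / real (degree q) ^ n))"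
    by (auto simp: fun_eq_iff Gdef A_def d_def)
  from UL show ?thesis unfolding EQ unfolding G_def .
qed

end
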